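(* Let $S$ be a measurement scenario, $n\ge1$, and $F\colon\mathrm{Emp}(S)\to\mathrm{Emp}(\mathbf n)$ a function preserving convex combinations. Identify $\mathrm{Emp}(\mathbf n)$ with the set of probability distributions on $\{0,\dots,n-1\}$. Then $F$ is induced by a probabilistic procedure $S\to\mathbf n$ (i.e. $F=\mathrm{Emp}(f)$ for some probabilistic procedure $f$) if and only if there exist reals $r_1,\dots,r_m>0$ with $\sum_jr_j=1$ and functions $F_j\colon\mathcal E_S(X_S)\to\{0,\dots,n-1\}$ such that $F(\delta_s)=\sum_jr_j\delta_{F_j(s)}$ for all $s\in\mathcal E_S(X_S)$ and, for each $j$, the least subset $U_j\subseteq X_S$ such that $F_j$ factors through $\mathcal E_S(U_j)$ belongs to $\Sigma_S$.
   Context: A simplicial complex $\Sigma$ on a finite set $X$ is a family of subsets containing $\emptyset$ and all singletons, closed under subsets. A measurement scenario $S=(X_S,O_S,\Sigma_S)$: finite set $X_S$, finite non-empty outcome sets $O_{S,x}$, simplicial complex $\Sigma_S$ of contexts. $\mathcal E_S(U)=\prod_{x\in U}O_{S,x}$, restriction $s|_V$. An empirical model on $S$ is a family $(e_\sigma)_{\sigma\in\Sigma_S}$ of probability distributions on $\mathcal E_S(\sigma)$ with $e_\tau$ the marginal of $e_\sigma$ whenever $\tau\subseteq\sigma$; $\mathrm{Emp}(S)$ is the convex set of these; $\delta_s$ ($s\in\mathcal E_S(X_S)$) is the model with $(\delta_s)_\sigma$ the point mass at $s|_\sigma$. $\mathbf n$ is the scenario with one measurement $*$ and outcomes $\{0,\dots,n-1\}$;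 $\delta_k$ is the point mass at $k$. $F_j$ factors through $\mathcal E_S(U)$ if $F_j(s)=\tilde F(s|_U)$ for some $\tilde F$ and all $s$ (a least such $U$ always exists). A simplicial relation from $\Sigma$ (on $X$) to $\Delta$ (on $Y$) is a relation $R\subseteq X\times Y$ with $R(\sigma)\in\Delta$ for all $\sigma\in\Sigma$. A deterministic procedure $f\colon S\to T$ is a pair $(\pi_f,\alpha_f)$ with $\pi_f$ a simplicial relation from $\Sigma_T$ to $\Sigma_S$ and $\alpha_{f,x}\colon\mathcal E_S(\pi_f(x))\to O_{T,x}$; it acts by $(\mathrm{Emp}(f)e)_\sigma=(\alpha_{f,\sigma})_*(e_{\pi_f(\sigma)})$ with $\alpha_{f,\sigma}(s)=(\alpha_{f,x}(s|_{\pi_f(x)}))_{x\in\sigma}$. A probabilistic procedure is a finitely supported probability distribution $\sum_ir_if_i$ on deterministic procedures, acting by $\mathrm{Emp}(\sum r_if_i)e=\sum r_i\mathrm{Emp}(f_i)e$. *)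

theory Defs
  imports Complex_Main "HOL-Library.FuncSet"
begin

text \<open>Sections over U are the extensional functions in PiE U Out; restriction is restrict.\<close>

definition simplicial_complex :: "'x set \<Rightarrow> 'x set set \<Rightarrow> bool" where
  "simplicial_complex X Sig \<longleftrightarrow>
     Sig \<subseteq> Pow X \<and> {} \<in> Sig \<and> (\<forall>x\<in>X. {x} \<in> Sig) \<and>
     (\<forall>\<sigma>\<in>Sig. \<forall>\<tau>. \<tau> \<subseteq> \<sigma> \<longrightarrow> \<tau> \<in> Sig)"

definition scenario :: "'x set \<Rightarrow> ('x \<Rightarrow> 'o set) \<Rightarrow> 'x set set \<Rightarrow> bool" where
  "scenario X Out Sig \<longleftrightarrow> finite X \<and> (\<forall>x\<in>X. finite (Out x) \<and> Out x \<noteq> {}) \<and>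
     simplicial_complex X Sig"

text \<open>Empirical models, represented canonically: e \<sigma> is a probability mass function
on the sections over \<sigma> (zero elsewhere), and e \<sigma> = 0 for non-contexts \<sigma>.\<close>

definition emp_model :: "'x set \<Rightarrow> ('x \<Rightarrow> 'o set) \<Rightarrow> 'x set set \<Rightarrow>
    ('x set \<Rightarrow> ('x \<Rightarrow> 'o) \<Rightarrow> real) \<Rightarrow> bool" where
  "emp_model X Out Sig e \<longleftrightarrow>
     (\<forall>\<sigma> s. \<sigma> \<notin> Sig \<longrightarrow> e \<sigma> s = 0) \<and>
     (\<forall>\<sigma>\<in>Sig. (\<forall>s. s \<notin> PiE \<sigma> Out \<longrightarrow> e \<sigma> s = 0) \<and>
               (\<forall>s\<in>PiE \<sigma> Out. 0 \<le> e \<sigma> s) \<and>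
               sum (e \<sigma>) (PiE \<sigma> Out) = 1) \<and>
     (\<forall>\<sigma>\<in>Sig. \<forall>\<tau>. \<tau> \<subseteq> \<sigma> \<longrightarrow>
        (\<forall>t\<in>PiE \<tau> Out. e \<tau> t = sum (e \<sigma>) {s \<in> PiE \<sigma> Out. restrict s \<tau> = t}))"

definition delta_model :: "'x set set \<Rightarrow> ('x \<Rightarrow> 'o) \<Rightarrow> 'x set \<Rightarrow> ('x \<Rightarrow> 'o) \<Rightarrow> real" where
  "delta_model Sig s = (\<lambda>\<sigma> t. if \<sigma> \<in> Sig \<and> t = restrict s \<sigma> then 1 else 0)"

text \<open>Deterministic procedures S \<rightarrow> T: a simplicial relation \<pi> from Sig_T to Sig_S
(as a set of pairs in X_T \<times> X_S) and maps \<alpha> x : E_S(\<pi>(x)) \<rightarrow> O_T x.\<close>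

definition det_proc :: "'x set \<Rightarrow> ('x \<Rightarrow> 'o set) \<Rightarrow> 'x set set \<Rightarrow>
    'y set \<Rightarrow> ('y \<Rightarrow> 'p set) \<Rightarrow> 'y set set \<Rightarrow>
    ('y \<times> 'x) set \<Rightarrow> ('y \<Rightarrow> ('x \<Rightarrow> 'o) \<Rightarrow> 'p) \<Rightarrow> bool" where
  "det_proc XS OS SigS XT OT SigT \<pi> \<alpha> \<longleftrightarrow>
     \<pi> \<subseteq> XT \<times> XS \<and> (\<forall>\<sigma>\<in>SigT. \<pi> `` \<sigma> \<in> SigS) \<and>
     (\<forall>x\<in>XT. \<forall>s\<in>PiE (\<pi> `` {x}) OS. \<alpha> x s \<in> OT x)"

text \<open>Action of a deterministic procedure: (Emp f e)_\<sigma> = (\<alpha>_\<sigma>)_* e_{\<pi>(\<sigma>)}.\<close>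
definition emp_det :: "('x \<Rightarrow> 'o set) \<Rightarrow> 'y set set \<Rightarrow>
    ('y \<times> 'x) set \<Rightarrow> ('y \<Rightarrow> ('x \<Rightarrow> 'o) \<Rightarrow> 'p) \<Rightarrow>
    ('x set \<Rightarrow> ('x \<Rightarrow> 'o) \<Rightarrow> real) \<Rightarrow> 'y set \<Rightarrow> ('y \<Rightarrow> 'p) \<Rightarrow> real" where
  "emp_det OS SigT \<pi> \<alpha> e = (\<lambda>\<sigma> t. if \<sigma> \<in> SigT then
      sum (e (\<pi> `` \<sigma>))
        {s \<in> PiE (\<pi> `` \<sigma>) OS. (\<lambda>x\<in>\<sigma>. \<alpha> x (restrict s (\<pi> `` {x}))) = t}
    else 0)"

text \<open>Probabilistic procedures: finitely supported distributions on deterministic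
procedures, given as a list of m weighted procedures (r i, f i), i < m.\<close>
definition prob_proc :: "'x set \<Rightarrow> ('x \<Rightarrow> 'o set) \<Rightarrow> 'x set set \<Rightarrow>
    'y set \<Rightarrow> ('y \<Rightarrow> 'p set) \<Rightarrow> 'y set set \<Rightarrow>
    nat \<Rightarrow> (nat \<Rightarrow> real) \<Rightarrow> (nat \<Rightarrow> ('y \<times> 'x) set \<times> ('y \<Rightarrow> ('x \<Rightarrow> 'o) \<Rightarrow> 'p)) \<Rightarrow> bool" where
  "prob_proc XS OS SigS XT OT SigT m r f \<longleftrightarrow>
     (\<forall>i<m. 0 \<le> r i) \<and> (\<Sum>i<m. r i) = 1 \<and>
     (\<forall>i<m. det_proc XS OS SigS XT OT SigT (fst (f i)) (snd (f i)))"

definition emp_prob :: "('x \<Rightarrow> 'o set) \<Rightarrow> 'y set set \<Rightarrow>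
    nat \<Rightarrow> (nat \<Rightarrow> real) \<Rightarrow> (nat \<Rightarrow> ('y \<times> 'x) set \<times> ('y \<Rightarrow> ('x \<Rightarrow> 'o) \<Rightarrow> 'p)) \<Rightarrow>
    ('x set \<Rightarrow> ('x \<Rightarrow> 'o) \<Rightarrow> real) \<Rightarrow> 'y set \<Rightarrow> ('y \<Rightarrow> 'p) \<Rightarrow> real" where
  "emp_prob OS SigT m r f e = (\<lambda>\<sigma> t. \<Sum>i<m. r i * emp_det OS SigT (fst (f i)) (snd (f i)) e \<sigma> t)"

text \<open>The scenario bold-n: one measurement (the unit value), outcomes {0..<n}, contexts Pow UNIV.\<close>
definition n_X :: "unit set" where "n_X = UNIV"
definition n_O :: "nat \<Rightarrow> unit \<Rightarrow> nat set" where "n_O n = (\<lambda>_. {0..<n})"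
definition n_Sig :: "unit set set" where "n_Sig = Pow UNIV"

definition emp_n_to_dist :: "(unit set \<Rightarrow> (unit \<Rightarrow> nat) \<Rightarrow> real) \<Rightarrow> nat \<Rightarrow> real" where
  "emp_n_to_dist d = (\<lambda>k. d UNIV (restrict (\<lambda>_. k) UNIV))"

definition dist_n :: "nat \<Rightarrow> (nat \<Rightarrow> real) \<Rightarrow> bool" where
  "dist_n n p \<longleftrightarrow> (\<forall>k. 0 \<le> p k) \<and> (\<forall>k\<ge>n. p k = 0) \<and> (\<Sum>k<n. p k) = 1"

definition factors_through :: "'x set \<Rightarrow> ('x \<Rightarrow> 'o set) \<Rightarrow> (('x \<Rightarrow> 'o) \<Rightarrow> 'a) \<Rightarrow> 'x set \<Rightarrow> bool" where
  "factors_through X Out G U \<longleftrightarrow> (\<exists>H. \<forall>s\<in>PiE X Out. G s = H (restrict s U))"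

definition least_factor_set :: "'x set \<Rightarrow> ('x \<Rightarrow> 'o set) \<Rightarrow> (('x \<Rightarrow> 'o) \<Rightarrow> 'a) \<Rightarrow> 'x set" where
  "least_factor_set X Out G = (THE U. U \<subseteq> X \<and> factors_through X Out G U \<and>
      (\<forall>V. V \<subseteq> X \<and> factors_through X Out G V \<longrightarrow> U \<subseteq> V))"

end

theory Submission
  imports Defs
begin

lemma scen_facts:
  assumes "scenario X Out Sig"
  shows "finite X" "\<And>x. x \<in> X \<Longrightarrow> finite (Out x)" "\<And>x. x \<in> X \<Longrightarrow> Out x \<noteq> {}"
    "Sig \<subseteq> Pow X" "{} \<in> Sig" "\<And>\<sigma> \<tau>. \<sigma> \<in> Sig \<Longrightarrow> \<tau> \<subseteq> \<sigma> \<Longrightarrow> \<tau> \<in> Sig"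
  using assms unfolding scenario_def simplicial_complex_def by auto

lemma PiE_ne:
  assumes "scenario X Out Sig" shows "PiE X Out \<noteq> {}"
  using scen_facts(3)[OF assms] by (simp add: PiE_eq_empty_iff)

lemma finite_PiE_X:
  assumes "scenario X Out Sig" "U \<subseteq> X" shows "finite (PiE U Out)"
  using scen_facts[OF assms(1)] assms(2)
  by (intro finite_PiE) (auto intro: finite_subset)

lemma restrict_in_PiE:
  assumes "s \<in> PiE X Out" "U \<subseteq> X" shows "restrict s U \<in> PiE U Out"
  using assms by (auto simp: PiE_iff)

lemma PiE_restrict_self: "s \<in> PiE U Out \<Longrightarrow> restrict s U = s"
  by (simp add: restrict_def fun_eq_iff PiE_iff extensional_def)

definition merge :: "'x set \<Rightarrow> ('x \<Rightarrow> 'o) \<Rightarrow> ('x \<Rightarrow> 'o) \<Rightarrow> 'x \<Rightarrow> 'o" where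
  "merge U u oo = (\<lambda>x. if x \<in> U then u x else oo x)"

lemma merge_PiE:
  assumes "u \<in> PiE U Out" "oo \<in> PiE X Out" "U \<subseteq> X"
  shows "merge U u oo \<in> PiE X Out"
  using assms by (auto simp: PiE_iff merge_def extensional_def)

lemma restrict_merge: "u \<in> PiE U Out \<Longrightarrow> restrict (merge U u oo) U = u"
  by (auto simp: fun_eq_iff restrict_def merge_def PiE_iff extensional_def)

lemma ft_iff:
  assumes "scenario X Out Sig"
  shows "factors_through X Out G U \<longleftrightarrow>
     (\<forall>s\<in>PiE X Out. \<forall>t\<in>PiE X Out. restrict s U = restrict t U \<longrightarrow> G s = G t)"
proof
  assume "factors_through X Out G U" then show "\<forall>s\<in>PiE X Out. \<forall>t\<in>PiE X Out. restrict s U = restrict t U \<longrightarrow> G s = G t"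
    unfolding factors_through_def by metis
next
  assume H: "\<forall>s\<in>PiE X Out. \<forall>t\<in>PiE X Out. restrict s U = restrict t U \<longrightarrow> G s = G t"
  define H' where "H' = (\<lambda>u. G (SOME s. s \<in> PiE X Out \<and> restrict s U = u))"
  have "\<forall>s\<in>PiE X Out. G s = H' (restrict s U)"
  proof
    fix s assume s: "s \<in> PiE X Out"
    have "\<exists>s'. s' \<in> PiE X Out \<and> restrict s' U = restrict s U" using s by blast
    then have "(SOME s'. s' \<in> PiE X Out \<and> restrict s' U = restrict s U) \<in> PiE X Out \<and>
      restrict (SOME s'. s' \<in> PiE X Out \<and> restrict s' U = restrict s U) U = restrict s U"
      by (rule someI_ex)
    then show "G s = H' (restrict s U)" unfolding H'_def using H s by metis
  qed
  then show "factors_through X Out G U" unfolding factors_through_def by blast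
qed

lemma ft_inter:
  assumes sc: "scenario X Out Sig" and U: "factors_through X Out G U" and V: "factors_through X Out G V"
  shows "factors_through X Out G (U \<inter> V)"
  unfolding ft_iff[OF sc]
proof (intro ballI impI)
  fix s t assume s: "s \<in> PiE X Out" and t: "t \<in> PiE X Out" and eq: "restrict s (U \<inter> V) = restrict t (U \<inter> V)"
  define w where "w = (\<lambda>x. if x \<in> U then s x else t x)"
  have w: "w \<in> PiE X Out" using s t by (auto simp: PiE_iff w_def extensional_def)
  have "restrict w U = restrict s U" by (auto simp: w_def restrict_def)
  then have 1: "G w = G s" using U w s unfolding ft_iff[OF sc] by metis
  have "restrict w V = restrict t V"
  proof
    fix x show "restrict w V x = restrict t V x"
      using fun_cong[OF eq, of x] by (auto simp: w_def restrict_def)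
  qed
  then have 2: "G w = G t" using V w t unfolding ft_iff[OF sc] by metis
  show "G s = G t" using 1 2 by simp
qed

lemma lfs:
  assumes sc: "scenario X Out Sig"
  shows "least_factor_set X Out G \<subseteq> X \<and> factors_through X Out G (least_factor_set X Out G) \<and>
     (\<forall>V. V \<subseteq> X \<and> factors_through X Out G V \<longrightarrow> least_factor_set X Out G \<subseteq> V)"
proof -
  define P where "P = (\<lambda>V. V \<subseteq> X \<and> factors_through X Out G V)"
  have PX: "P X" unfolding P_def factors_through_def
    by (rule conjI, simp, rule exI[of _ G], simp add: PiE_restrict_self)
  obtain U where PU: "P U" and min: "\<forall>V. P V \<longrightarrow> card U \<le> card V"
    using ex_has_least_nat[of P X card] PX by blast
  have fin: "\<And>V. P V \<Longrightarrow> finite V" using scen_facts(1)[OF sc] unfolding P_def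
    by (auto intro: finite_subset)
  have least: "\<forall>V. P V \<longrightarrow> U \<subseteq> V"
  proof (intro allI impI)
    fix V assume PV: "P V"
    have PUV: "P (U \<inter> V)" using PU PV ft_inter[OF sc] unfolding P_def by blast
    show "U \<subseteq> V"
    proof (rule ccontr)
      assume "\<not> U \<subseteq> V"
      then have "U \<inter> V \<subset> U" by blast
      then have "card (U \<inter> V) < card U" using fin[OF PU] by (rule psubset_card_mono[rotated])
      then show False using min PUV by fastforce
    qed
  qed
  have "least_factor_set X Out G = U"
    unfolding least_factor_set_def
    by (rule the_equality) (use PU least in \<open>auto simp: P_def\<close>)
  then show ?thesis using PU least unfolding P_def by simp
qed

lemma empD1:
  assumes "emp_model X Out Sig e" "\<sigma> \<notin> Sig" shows "e \<sigma> s = 0"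
  using assms unfolding emp_model_def by simp
lemma empD2:
  assumes "emp_model X Out Sig e" "\<sigma> \<in> Sig" "s \<notin> PiE \<sigma> Out" shows "e \<sigma> s = 0"
  using assms unfolding emp_model_def by simp
lemma empD234:
  assumes "emp_model X Out Sig e" "\<sigma> \<in> Sig"
  shows "(\<forall>s. s \<notin> PiE \<sigma> Out \<longrightarrow> e \<sigma> s = 0) \<and>
               (\<forall>s\<in>PiE \<sigma> Out. 0 \<le> e \<sigma> s) \<and>
               sum (e \<sigma>) (PiE \<sigma> Out) = 1"
proof -
  have h: "\<forall>\<sigma>\<in>Sig. (\<forall>s. s \<notin> PiE \<sigma> Out \<longrightarrow> e \<sigma> s = 0) \<and>
               (\<forall>s\<in>PiE \<sigma> Out. 0 \<le> e \<sigma> s) \<and>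
               sum (e \<sigma>) (PiE \<sigma> Out) = 1"
    using assms(1) unfolding emp_model_def by (elim conjE)
  show ?thesis using h assms(2) by (rule bspec)
qed
lemma empD3:
  assumes "emp_model X Out Sig e" "\<sigma> \<in> Sig" "s \<in> PiE \<sigma> Out" shows "0 \<le> e \<sigma> s"
  using empD234[OF assms(1,2)] assms(3) by blast
lemma empD4:
  assumes "emp_model X Out Sig e" "\<sigma> \<in> Sig" shows "sum (e \<sigma>) (PiE \<sigma> Out) = 1"
  using empD234[OF assms(1,2)] by blast
lemma empD5:
  assumes "emp_model X Out Sig e" "\<sigma> \<in> Sig" "\<tau> \<subseteq> \<sigma>" "t \<in> PiE \<tau> Out"
  shows "e \<tau> t = sum (e \<sigma>) {s \<in> PiE \<sigma> Out. restrict s \<tau> = t}"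
proof -
  have h: "\<forall>\<sigma>\<in>Sig. \<forall>\<tau>. \<tau> \<subseteq> \<sigma> \<longrightarrow>
        (\<forall>t\<in>PiE \<tau> Out. e \<tau> t = sum (e \<sigma>) {s \<in> PiE \<sigma> Out. restrict s \<tau> = t})"
    using assms(1) unfolding emp_model_def by (elim conjE)
  have "\<forall>\<tau>. \<tau> \<subseteq> \<sigma> \<longrightarrow> (\<forall>t\<in>PiE \<tau> Out. e \<tau> t = sum (e \<sigma>) {s \<in> PiE \<sigma> Out. restrict s \<tau> = t})"
    using h assms(2) by (rule bspec)
  then have "\<tau> \<subseteq> \<sigma> \<longrightarrow> (\<forall>t\<in>PiE \<tau> Out. e \<tau> t = sum (e \<sigma>) {s \<in> PiE \<sigma> Out. restrict s \<tau> = t})"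
    by (rule spec)
  then have "\<forall>t\<in>PiE \<tau> Out. e \<tau> t = sum (e \<sigma>) {s \<in> PiE \<sigma> Out. restrict s \<tau> = t}"
    using assms(3) by (rule mp)
  then show ?thesis using assms(4) by (rule bspec)
qed

lemma emp_convex:
  assumes sc: "scenario X Out Sig" and e1: "emp_model X Out Sig e1" and e2: "emp_model X Out Sig e2"
    and t: "0 \<le> t" "t \<le> 1"
  shows "emp_model X Out Sig (\<lambda>\<sigma> s. t * e1 \<sigma> s + (1 - t) * e2 \<sigma> s)"
  unfolding emp_model_def
proof (intro conjI ballI allI impI)
  fix \<sigma> s assume "\<sigma> \<notin> Sig" then show "t * e1 \<sigma> s + (1 - t) * e2 \<sigma> s = 0" using empD1[OF e1] empD1[OF e2] by simp
next
  fix \<sigma> s assume "\<sigma> \<in> Sig" "s \<notin> PiE \<sigma> Out" then show "t * e1 \<sigma> s + (1 - t) * e2 \<sigma> s = 0" using empD2[OF e1] empD2[OF e2] by simp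
next
  fix \<sigma> s assume "\<sigma> \<in> Sig" "s \<in> PiE \<sigma> Out" then show "0 \<le> t * e1 \<sigma> s + (1 - t) * e2 \<sigma> s" using empD3[OF e1] empD3[OF e2] t by simp
next
  fix \<sigma> assume "\<sigma> \<in> Sig" then show "(\<Sum>s\<in>PiE \<sigma> Out. t * e1 \<sigma> s + (1 - t) * e2 \<sigma> s) = 1"
    using empD4[OF e1] empD4[OF e2] by (simp add: sum.distrib sum_distrib_left[symmetric])
next
  fix \<sigma> \<tau> t' assume a: "\<sigma> \<in> Sig" "\<tau> \<subseteq> \<sigma>" "t' \<in> PiE \<tau> Out"
  show "t * e1 \<tau> t' + (1 - t) * e2 \<tau> t' = (\<Sum>s\<in>{s \<in> PiE \<sigma> Out. restrict s \<tau> = t'}. t * e1 \<sigma> s + (1 - t) * e2 \<sigma> s)"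
    unfolding empD5[OF e1 a] empD5[OF e2 a] by (simp add: sum.distrib sum_distrib_left[symmetric])
qed

lemma delta_emp:
  assumes sc: "scenario X Out Sig" and s: "s \<in> PiE X Out"
  shows "emp_model X Out Sig (delta_model Sig s)"
  unfolding emp_model_def delta_model_def
proof (intro conjI ballI allI impI)
  fix \<sigma> assume sig: "\<sigma> \<in> Sig"
  have sub: "\<sigma> \<subseteq> X" using sig scen_facts(4)[OF sc] by auto
  have r: "restrict s \<sigma> \<in> PiE \<sigma> Out" by (rule restrict_in_PiE[OF s sub])
  show "(\<Sum>t\<in>PiE \<sigma> Out. if \<sigma> \<in> Sig \<and> t = restrict s \<sigma> then 1 else 0) = (1::real)"
    using sig r finite_PiE_X[OF sc sub] by (simp add: sum.delta')
  fix u assume "u \<notin> PiE \<sigma> Out"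
  then show "(if \<sigma> \<in> Sig \<and> u = restrict s \<sigma> then 1 else 0) = (0::real)" using r by auto
next
  fix \<sigma> \<tau> t assume sig: "\<sigma> \<in> Sig" and tau: "\<tau> \<subseteq> \<sigma>" and t: "t \<in> PiE \<tau> Out"
  have sub: "\<sigma> \<subseteq> X" using sig scen_facts(4)[OF sc] by auto
  have r: "restrict s \<sigma> \<in> PiE \<sigma> Out" by (rule restrict_in_PiE[OF s sub])
  have tsig: "\<tau> \<in> Sig" using scen_facts(6)[OF sc sig tau] .
  have fin: "finite {u \<in> PiE \<sigma> Out. restrict u \<tau> = t}" using finite_PiE_X[OF sc sub] by simp
  have rr: "restrict (restrict s \<sigma>) \<tau> = restrict s \<tau>" using tau by (simp add: Int_absorb1)
  show "(if \<tau> \<in> Sig \<and> t = restrict s \<tau> then 1 else 0) =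
         (\<Sum>u\<in>{u \<in> PiE \<sigma> Out. restrict u \<tau> = t}. if \<sigma> \<in> Sig \<and> u = restrict s \<sigma> then 1 else (0::real))"
    using sig tsig r rr fin by (auto simp: sum.delta')
qed auto

lemma convex_sum:
  fixes F :: "('a \<Rightarrow> 'b \<Rightarrow> real) \<Rightarrow> 'c \<Rightarrow> real"
  assumes C: "\<And>x y t. C x \<Longrightarrow> C y \<Longrightarrow> 0\<le>t \<Longrightarrow> t\<le>1 \<Longrightarrow> C (\<lambda>\<sigma> s. t * x \<sigma> s + (1-t) * y \<sigma> s)"
    and Fc: "\<And>x y t. C x \<Longrightarrow> C y \<Longrightarrow> 0\<le>t \<Longrightarrow> t\<le>1 \<Longrightarrow>
        F (\<lambda>\<sigma> s. t * x \<sigma> s + (1-t) * y \<sigma> s) = (\<lambda>k. t * F x k + (1-t) * F y k)"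
  shows "finite I \<Longrightarrow> I \<noteq> {} \<Longrightarrow> (\<forall>i\<in>I. C (p i)) \<Longrightarrow> (\<forall>i\<in>I. 0 \<le> w i) \<Longrightarrow> sum w I = 1 \<Longrightarrow>
     C (\<lambda>\<sigma> s. \<Sum>i\<in>I. w i * p i \<sigma> s) \<and> F (\<lambda>\<sigma> s. \<Sum>i\<in>I. w i * p i \<sigma> s) = (\<lambda>k. \<Sum>i\<in>I. w i * F (p i) k)"
proof (induction I arbitrary: w rule: finite_ne_induct)
  case (singleton i)
  then show ?case by simp
next
  case (insert i I)
  show ?case
  proof (cases "w i = 1")
    case True
    have sI: "sum w I = 0" using insert.prems insert.hyps True by simp
    have z: "\<forall>j\<in>I. w j = 0" using sum_nonneg_eq_0_iff[OF insert.hyps(1)] sI insert.prems by auto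
    have e1: "(\<lambda>\<sigma> s. \<Sum>j\<in>insert i I. w j * p j \<sigma> s) = p i"
      using insert.hyps z True by (simp add: fun_eq_iff)
    have e2: "(\<lambda>k. \<Sum>j\<in>insert i I. w j * F (p j) k) = F (p i)"
      using insert.hyps z True by (simp add: fun_eq_iff)
    show ?thesis using e1 e2 insert.prems by simp
  next
    case False
    have wi: "0 \<le> w i" "w i < 1"
    proof -
      show "0 \<le> w i" using insert.prems by simp
      have "sum w I \<ge> 0" using insert.prems by (simp add: sum_nonneg)
      then show "w i < 1" using insert.prems insert.hyps False by simp
    qed
    define w' where "w' = (\<lambda>j. w j / (1 - w i))"
    have sw: "sum w I = 1 - w i" using insert.prems insert.hyps by simp
    have sw': "sum w' I = 1" unfolding w'_def using sw wi by (simp add: sum_divide_distrib[symmetric])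
    have IH: "C (\<lambda>\<sigma> s. \<Sum>j\<in>I. w' j * p j \<sigma> s) \<and> F (\<lambda>\<sigma> s. \<Sum>j\<in>I. w' j * p j \<sigma> s) = (\<lambda>k. \<Sum>j\<in>I. w' j * F (p j) k)"
      using insert.IH[of w'] insert.prems sw' wi unfolding w'_def by simp
    define q where "q = (\<lambda>\<sigma> s. \<Sum>j\<in>I. w' j * p j \<sigma> s)"
    have eq: "(\<lambda>\<sigma> s. \<Sum>j\<in>insert i I. w j * p j \<sigma> s) = (\<lambda>\<sigma> s. w i * p i \<sigma> s + (1 - w i) * q \<sigma> s)"
      using insert.hyps wi unfolding q_def w'_def by (simp add: fun_eq_iff sum_distrib_left)
    have eqF: "(\<lambda>k. \<Sum>j\<in>insert i I. w j * F (p j) k) = (\<lambda>k. w i * F (p i) k + (1 - w i) * (\<Sum>j\<in>I. w' j * F (p j) k))"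
      using insert.hyps wi unfolding w'_def by (simp add: fun_eq_iff sum_distrib_left)
    have Cp: "C (p i)" using insert.prems by simp
    have Cq: "C q" using IH q_def by simp
    show ?thesis unfolding eq eqF using C[OF Cp Cq] Fc[OF Cp Cq] wi IH q_def by simp
  qed
qed

lemma sum_b_group:
  assumes sc: "scenario X Out Sig" and sub: "\<sigma> \<subseteq> X" and oo: "oo \<in> PiE X Out"
  shows "sum (\<lambda>s. if s = merge \<sigma> (restrict s \<sigma>) oo then d (restrict s \<sigma>) else 0) {s \<in> PiE X Out. restrict s \<tau> = t}
       = sum d {u \<in> PiE \<sigma> Out. restrict (merge \<sigma> u oo) \<tau> = t}"
proof -
  let ?S = "{s \<in> PiE X Out. restrict s \<tau> = t}"
  let ?b = "\<lambda>s. if s = merge \<sigma> (restrict s \<sigma>) oo then d (restrict s \<sigma>) else 0"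
  have finS: "finite ?S" using finite_PiE_X[OF sc order_refl] by simp
  have finT: "finite (PiE \<sigma> Out)" using finite_PiE_X[OF sc sub] .
  have img: "(\<lambda>s. restrict s \<sigma>) ` ?S \<subseteq> PiE \<sigma> Out" using sub by (auto simp: PiE_iff)
  have "sum ?b ?S = (\<Sum>u\<in>PiE \<sigma> Out. sum ?b {s \<in> ?S. restrict s \<sigma> = u})"
    using sum.group[OF finS finT img, of ?b] by simp
  also have "\<dots> = (\<Sum>u\<in>PiE \<sigma> Out. if restrict (merge \<sigma> u oo) \<tau> = t then d u else 0)"
  proof (rule sum.cong[OF refl])
    fix u assume u: "u \<in> PiE \<sigma> Out"
    have fin: "finite {s \<in> ?S. restrict s \<sigma> = u}" using finS by (rule finite_subset[rotated]) auto
    have "sum ?b {s \<in> ?S. restrict s \<sigma> = u} = (\<Sum>s\<in>{s \<in> ?S. restrict s \<sigma> = u}. if merge \<sigma> u oo = s then d u else 0)"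
      by (rule sum.cong[OF refl]) auto
    also have "\<dots> = (if merge \<sigma> u oo \<in> {s \<in> ?S. restrict s \<sigma> = u} then d u else 0)"
      by (rule sum.delta'[OF fin])
    also have "\<dots> = (if restrict (merge \<sigma> u oo) \<tau> = t then d u else 0)"
      using merge_PiE[OF u oo sub] restrict_merge[OF u] by simp
    finally show "sum ?b {s \<in> ?S. restrict s \<sigma> = u} = (if restrict (merge \<sigma> u oo) \<tau> = t then d u else 0)" .
  qed
  also have "\<dots> = sum d {u \<in> PiE \<sigma> Out. restrict (merge \<sigma> u oo) \<tau> = t}"
    using sum.inter_filter[OF finT, of d] by simp
  finally show ?thesis .
qed

lemma merge_cond:
  assumes u: "u \<in> PiE \<sigma> Out" and t: "t \<in> PiE \<tau> Out" and agree: "\<forall>x\<in>\<tau>-\<sigma>. oo x = t x"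
  shows "restrict (merge \<sigma> u oo) \<tau> = t \<longleftrightarrow> restrict u (\<sigma> \<inter> \<tau>) = restrict t (\<sigma> \<inter> \<tau>)"
proof
  assume h: "restrict (merge \<sigma> u oo) \<tau> = t"
  show "restrict u (\<sigma> \<inter> \<tau>) = restrict t (\<sigma> \<inter> \<tau>)"
  proof
    fix x show "restrict u (\<sigma> \<inter> \<tau>) x = restrict t (\<sigma> \<inter> \<tau>) x"
      using fun_cong[OF h, of x] by (auto simp: merge_def)
  qed
next
  assume h: "restrict u (\<sigma> \<inter> \<tau>) = restrict t (\<sigma> \<inter> \<tau>)"
  show "restrict (merge \<sigma> u oo) \<tau> = t"
  proof
    fix x show "restrict (merge \<sigma> u oo) \<tau> x = t x"
      using fun_cong[OF h, of x] agree t by (auto simp: merge_def PiE_iff extensional_def)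
  qed
qed

lemma merge_cond_empty:
  assumes "x \<in> \<tau>" "x \<notin> \<sigma>" "oo x \<noteq> t x"
  shows "restrict (merge \<sigma> u oo) \<tau> \<noteq> t"
proof
  assume "restrict (merge \<sigma> u oo) \<tau> = t"
  from fun_cong[OF this, of x] assms show False by (simp add: merge_def)
qed

lemma decomp_K:
  assumes sc: "scenario X Out Sig" and e: "emp_model X Out Sig e"
  shows "K \<subseteq> Sig \<Longrightarrow> {} \<in> K \<Longrightarrow> (\<forall>\<sigma>\<in>K. \<forall>\<tau>. \<tau> \<subseteq> \<sigma> \<longrightarrow> \<tau> \<in> K) \<Longrightarrow>
    \<exists>a. \<forall>\<tau>\<in>K. \<forall>t\<in>PiE \<tau> Out. e \<tau> t = sum a {s \<in> PiE X Out. restrict s \<tau> = t}"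
proof (induction "card K" arbitrary: K rule: less_induct)
  case less
  note KS = less.prems(1) and K0 = less.prems(2) and Kd = less.prems(3)
  have SigX: "Sig \<subseteq> Pow X" using scen_facts(4)[OF sc] .
  have finX: "finite X" using scen_facts(1)[OF sc] .
  have finK: "finite K" using KS SigX finX by (meson finite_Pow_iff finite_subset)
  have KX: "\<And>\<tau>. \<tau> \<in> K \<Longrightarrow> \<tau> \<subseteq> X" using KS SigX by blast
  obtain oo where oo: "oo \<in> PiE X Out" using PiE_ne[OF sc] by blast
  have finP: "finite (PiE X Out)" using finite_PiE_X[OF sc order_refl] .
  show ?case
  proof (cases "K = {{}}")
    case True
    define a where "a = (\<lambda>s. if s = oo then 1 else (0::real))"
    have "\<forall>\<tau>\<in>K. \<forall>t\<in>PiE \<tau> Out. e \<tau> t = sum a {s \<in> PiE X Out. restrict s \<tau> = t}"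
    proof (intro ballI)
      fix \<tau> t assume "\<tau> \<in> K" "t \<in> PiE \<tau> Out"
      then have tau: "\<tau> = {}" and tt: "t = (\<lambda>x. undefined)" using True by auto
      have "{s \<in> PiE X Out. restrict s \<tau> = t} = PiE X Out" using tau tt by (auto simp: restrict_def)
      then have "sum a {s \<in> PiE X Out. restrict s \<tau> = t} = 1"
        using oo finP unfolding a_def by (simp add: sum.delta)
      moreover have "e \<tau> t = 1" using empD4[OF e scen_facts(5)[OF sc]] tau tt by simp
      ultimately show "e \<tau> t = sum a {s \<in> PiE X Out. restrict s \<tau> = t}" by simp
    qed
    then show ?thesis by blast
  next
    case False
    obtain \<tau>0 where t0: "\<tau>0 \<in> K" "\<tau>0 \<noteq> {}" using False K0 by blast
    define c where "c = Max (card ` K)"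
    have "c \<in> card ` K" unfolding c_def using finK K0 by (intro Max_in) auto
    then obtain \<sigma> where sK: "\<sigma> \<in> K" and cs: "card \<sigma> = c" by blast
    have cmax: "\<And>\<tau>. \<tau> \<in> K \<Longrightarrow> card \<tau> \<le> card \<sigma>" unfolding cs c_def using finK by simp
    have fin_el: "\<And>\<tau>. \<tau> \<in> K \<Longrightarrow> finite \<tau>" using KX finX finite_subset by blast
    have "card \<tau>0 > 0" using t0 fin_el by (simp add: card_gt_0_iff)
    then have "card \<sigma> > 0" using cmax[OF t0(1)] by simp
    then have sne: "\<sigma> \<noteq> {}" by auto
    have maxi: "\<And>\<tau>. \<tau> \<in> K \<Longrightarrow> \<sigma> \<subseteq> \<tau> \<Longrightarrow> \<tau> = \<sigma>"
    proof (rule ccontr)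
      fix \<tau> assume a: "\<tau> \<in> K" "\<sigma> \<subseteq> \<tau>" "\<tau> \<noteq> \<sigma>"
      then have "\<sigma> \<subset> \<tau>" by blast
      then have "card \<sigma> < card \<tau>" using fin_el[OF a(1)] by (rule psubset_card_mono[rotated])
      then show False using cmax[OF a(1)] by simp
    qed
    define K' where "K' = K - {\<sigma>}"
    have cK': "card K' < card K" unfolding K'_def using card_Diff1_less[OF finK sK] .
    have K'S: "K' \<subseteq> Sig" using KS K'_def by blast
    have K'0: "{} \<in> K'" using K0 sne K'_def by blast
    have K'd: "\<forall>\<sigma>'\<in>K'. \<forall>\<tau>. \<tau> \<subseteq> \<sigma>' \<longrightarrow> \<tau> \<in> K'"
    proof (intro ballI allI impI)
      fix \<sigma>' \<tau> assume a: "\<sigma>' \<in> K'" "\<tau> \<subseteq> \<sigma>'"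
      have "\<tau> \<in> K" using Kd a K'_def by blast
      moreover have "\<tau> \<noteq> \<sigma>" using a maxi K'_def by blast
      ultimately show "\<tau> \<in> K'" unfolding K'_def by blast
    qed
    obtain a' where a': "\<forall>\<tau>\<in>K'. \<forall>t\<in>PiE \<tau> Out. e \<tau> t = sum a' {s \<in> PiE X Out. restrict s \<tau> = t}"
      using less.hyps[OF cK' K'S K'0 K'd] by blast
    have sX: "\<sigma> \<subseteq> X" using KX[OF sK] .
    have sSig: "\<sigma> \<in> Sig" using KS sK by blast
    define d where "d = (\<lambda>u. e \<sigma> u - sum a' {s \<in> PiE X Out. restrict s \<sigma> = u})"
    define b where "b = (\<lambda>s. if s = merge \<sigma> (restrict s \<sigma>) oo then d (restrict s \<sigma>) else 0)"
    define a where "a = (\<lambda>s. a' s + b s)"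
    have finPs: "finite (PiE \<sigma> Out)" using finite_PiE_X[OF sc sX] .
    have dzero: "\<And>\<rho> t'. \<rho> \<in> K' \<Longrightarrow> \<rho> \<subseteq> \<sigma> \<Longrightarrow> t' \<in> PiE \<rho> Out \<Longrightarrow>
        sum d {u \<in> PiE \<sigma> Out. restrict u \<rho> = t'} = 0"
    proof -
      fix \<rho> t' assume r: "\<rho> \<in> K'" "\<rho> \<subseteq> \<sigma>" and t': "t' \<in> PiE \<rho> Out"
      let ?T = "{u \<in> PiE \<sigma> Out. restrict u \<rho> = t'}"
      let ?S = "{s \<in> PiE X Out. restrict s \<rho> = t'}"
      have finT: "finite ?T" using finPs by simp
      have finS: "finite ?S" using finP by simp
      have img: "(\<lambda>s. restrict s \<sigma>) ` ?S \<subseteq> ?T"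
        using sX r(2) by (auto simp: Int_absorb1 Int_absorb2 PiE_iff)
      have grp: "sum a' ?S = (\<Sum>u\<in>?T. sum a' {s \<in> ?S. restrict s \<sigma> = u})"
        using sum.group[OF finS finT img, of a'] by simp
      have "(\<Sum>u\<in>?T. sum a' {s \<in> ?S. restrict s \<sigma> = u}) = (\<Sum>u\<in>?T. sum a' {s \<in> PiE X Out. restrict s \<sigma> = u})"
      proof (rule sum.cong[OF refl])
        fix u assume "u \<in> ?T"
        then have "{s \<in> ?S. restrict s \<sigma> = u} = {s \<in> PiE X Out. restrict s \<sigma> = u}"
          using r(2) by (auto simp: Int_absorb1 Int_absorb2)
        then show "sum a' {s \<in> ?S. restrict s \<sigma> = u} = sum a' {s \<in> PiE X Out. restrict s \<sigma> = u}" by simp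
      qed
      then have A: "(\<Sum>u\<in>?T. sum a' {s \<in> PiE X Out. restrict s \<sigma> = u}) = e \<rho> t'"
        using grp a' r(1) t' by simp
      have B: "sum (e \<sigma>) ?T = e \<rho> t'" using empD5[OF e sSig r(2) t'] by simp
      show "sum d ?T = 0" unfolding d_def using A B by (simp add: sum_subtractf)
    qed
    have "\<forall>\<tau>\<in>K. \<forall>t\<in>PiE \<tau> Out. e \<tau> t = sum a {s \<in> PiE X Out. restrict s \<tau> = t}"
    proof (intro ballI)
      fix \<tau> t assume tK: "\<tau> \<in> K" and t: "t \<in> PiE \<tau> Out"
      have split: "sum a {s \<in> PiE X Out. restrict s \<tau> = t} =
          sum a' {s \<in> PiE X Out. restrict s \<tau> = t} + sum d {u \<in> PiE \<sigma> Out. restrict (merge \<sigma> u oo) \<tau> = t}"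
        unfolding a_def sum.distrib b_def using sum_b_group[OF sc sX oo] by simp
      show "e \<tau> t = sum a {s \<in> PiE X Out. restrict s \<tau> = t}"
      proof (cases "\<tau> = \<sigma>")
        case True
        have "{u \<in> PiE \<sigma> Out. restrict (merge \<sigma> u oo) \<tau> = t} = {t}"
        proof (intro equalityI subsetI)
          fix u assume "u \<in> {u \<in> PiE \<sigma> Out. restrict (merge \<sigma> u oo) \<tau> = t}"
          then show "u \<in> {t}" using restrict_merge[of u \<sigma> Out oo] True by auto
        next
          fix u assume "u \<in> {t}"
          then show "u \<in> {u \<in> PiE \<sigma> Out. restrict (merge \<sigma> u oo) \<tau> = t}"
            using t True restrict_merge[of t \<sigma> Out oo] by auto
        qed
        then show ?thesis using split True unfolding d_def by simp
      next
        case False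
        then have tK': "\<tau> \<in> K'" using tK K'_def by blast
        have zero: "sum d {u \<in> PiE \<sigma> Out. restrict (merge \<sigma> u oo) \<tau> = t} = 0"
        proof (cases "\<forall>x\<in>\<tau>-\<sigma>. oo x = t x")
          case True
          have "{u \<in> PiE \<sigma> Out. restrict (merge \<sigma> u oo) \<tau> = t} =
              {u \<in> PiE \<sigma> Out. restrict u (\<sigma> \<inter> \<tau>) = restrict t (\<sigma> \<inter> \<tau>)}"
          proof (rule Collect_cong)
            fix u show "(u \<in> PiE \<sigma> Out \<and> restrict (merge \<sigma> u oo) \<tau> = t) =
                (u \<in> PiE \<sigma> Out \<and> restrict u (\<sigma> \<inter> \<tau>) = restrict t (\<sigma> \<inter> \<tau>))"
              using merge_cond[OF _ t True, of u] by blast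
          qed
          moreover have "\<sigma> \<inter> \<tau> \<in> K'"
          proof -
            have "\<sigma> \<inter> \<tau> \<in> K" using Kd tK by blast
            moreover have "\<sigma> \<inter> \<tau> \<noteq> \<sigma>" using maxi[OF tK] False by blast
            ultimately show ?thesis unfolding K'_def by blast
          qed
          moreover have "restrict t (\<sigma> \<inter> \<tau>) \<in> PiE (\<sigma> \<inter> \<tau>) Out" using t by (auto simp: PiE_iff)
          ultimately show ?thesis using dzero[of "\<sigma> \<inter> \<tau>"] by simp
        next
          case False
          then obtain x where x: "x \<in> \<tau>" "x \<notin> \<sigma>" "oo x \<noteq> t x" by blast
          have E: "{u \<in> PiE \<sigma> Out. restrict (merge \<sigma> u oo) \<tau> = t} = {}"
            using merge_cond_empty[of x \<tau> \<sigma> oo t, OF x] by auto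
          show ?thesis unfolding E by simp
        qed
        show ?thesis using split zero a' tK' t by simp
      qed
    qed
    then show ?thesis by blast
  qed
qed

lemma decomp:
  assumes sc: "scenario X Out Sig" and e: "emp_model X Out Sig e"
  shows "\<exists>a. \<forall>\<tau>\<in>Sig. \<forall>t\<in>PiE \<tau> Out. e \<tau> t = sum a {s \<in> PiE X Out. restrict s \<tau> = t}"
  using decomp_K[OF sc e order_refl scen_facts(5)[OF sc]] scen_facts(6)[OF sc] by blast

lemma decomp_sum1:
  assumes sc: "scenario X Out Sig" and e: "emp_model X Out Sig e"
    and a: "\<forall>\<tau>\<in>Sig. \<forall>t\<in>PiE \<tau> Out. e \<tau> t = sum a {s \<in> PiE X Out. restrict s \<tau> = t}"
  shows "sum a (PiE X Out) = 1"
proof -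
  have s0: "{} \<in> Sig" using scen_facts(5)[OF sc] .
  have "e {} (\<lambda>x. undefined) = sum a {s \<in> PiE X Out. restrict s {} = (\<lambda>x. undefined)}"
    using a s0 by simp
  moreover have "{s \<in> PiE X Out. restrict s {} = (\<lambda>x. undefined)} = PiE X Out" by (auto simp: restrict_def)
  moreover have "e {} (\<lambda>x. undefined) = 1" using empD4[OF e s0] by simp
  ultimately show ?thesis by simp
qed

lemma delta_form:
  assumes sc: "scenario X Out Sig" and e: "emp_model X Out Sig e"
    and a: "\<forall>\<tau>\<in>Sig. \<forall>t\<in>PiE \<tau> Out. e \<tau> t = sum a {s \<in> PiE X Out. restrict s \<tau> = t}"
  shows "e = (\<lambda>\<sigma> t. \<Sum>s\<in>PiE X Out. a s * delta_model Sig s \<sigma> t)"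
proof (intro ext)
  fix \<sigma> t
  have finP: "finite (PiE X Out)" using finite_PiE_X[OF sc order_refl] .
  show "e \<sigma> t = (\<Sum>s\<in>PiE X Out. a s * delta_model Sig s \<sigma> t)"
  proof (cases "\<sigma> \<in> Sig")
    case False
    then show ?thesis using empD1[OF e False] by (simp add: delta_model_def)
  next
    case sig: True
    have sX: "\<sigma> \<subseteq> X" using sig scen_facts(4)[OF sc] by blast
    show ?thesis
    proof (cases "t \<in> PiE \<sigma> Out")
      case True
      have "(\<Sum>s\<in>PiE X Out. a s * delta_model Sig s \<sigma> t) = (\<Sum>s\<in>PiE X Out. if restrict s \<sigma> = t then a s else 0)"
        by (rule sum.cong) (auto simp: delta_model_def sig)
      also have "\<dots> = sum a {s \<in> PiE X Out. restrict s \<sigma> = t}"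
        using sum.inter_filter[OF finP, of a] by simp
      finally show ?thesis using a sig True by simp
    next
      case False
      have "(\<Sum>s\<in>PiE X Out. a s * delta_model Sig s \<sigma> t) = 0"
      proof (rule sum.neutral, rule ballI)
        fix s assume s: "s \<in> PiE X Out"
        have "restrict s \<sigma> \<noteq> t" using restrict_in_PiE[OF s sX] False by auto
        then show "a s * delta_model Sig s \<sigma> t = 0" by (simp add: delta_model_def)
      qed
      then show ?thesis using empD2[OF e sig False] by simp
    qed
  qed
qed

lemma F_decomp:
  fixes F :: "('x set \<Rightarrow> ('x \<Rightarrow> 'o) \<Rightarrow> real) \<Rightarrow> 'c \<Rightarrow> real"
  assumes sc: "scenario X Out Sig"
    and F_convex: "\<forall>e1 e2 (t::real). emp_model X Out Sig e1 \<longrightarrow> emp_model X Out Sig e2 \<longrightarrow>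
        0 \<le> t \<longrightarrow> t \<le> 1 \<longrightarrow>
        F (\<lambda>\<sigma> s. t * e1 \<sigma> s + (1 - t) * e2 \<sigma> s) = (\<lambda>k. t * F e1 k + (1 - t) * F e2 k)"
    and e: "emp_model X Out Sig e"
    and a: "\<forall>\<tau>\<in>Sig. \<forall>t\<in>PiE \<tau> Out. e \<tau> t = sum a {s \<in> PiE X Out. restrict s \<tau> = t}"
  shows "F e = (\<lambda>k. \<Sum>s\<in>PiE X Out. a s * F (delta_model Sig s) k)"
proof -
  let ?P = "PiE X Out"
  let ?D = "delta_model Sig"
  have finP: "finite ?P" using finite_PiE_X[OF sc order_refl] .
  have neP: "?P \<noteq> {}" using PiE_ne[OF sc] .
  have CD: "\<forall>s\<in>?P. emp_model X Out Sig (?D s)" using delta_emp[OF sc] by blast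
  have Cc: "\<And>x y t. emp_model X Out Sig x \<Longrightarrow> emp_model X Out Sig y \<Longrightarrow> 0\<le>t \<Longrightarrow> t\<le>1 \<Longrightarrow>
      emp_model X Out Sig (\<lambda>\<sigma> s. t * x \<sigma> s + (1-t) * y \<sigma> s)"
    using emp_convex[OF sc] by blast
  have Fc: "\<And>x y t. emp_model X Out Sig x \<Longrightarrow> emp_model X Out Sig y \<Longrightarrow> 0\<le>t \<Longrightarrow> t\<le>1 \<Longrightarrow>
      F (\<lambda>\<sigma> s. t * x \<sigma> s + (1-t) * y \<sigma> s) = (\<lambda>k. t * F x k + (1-t) * F y k)"
    using F_convex by blast
  have CS: "\<And>w. \<forall>s\<in>?P. 0 \<le> w s \<Longrightarrow> sum w ?P = 1 \<Longrightarrow>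
     emp_model X Out Sig (\<lambda>\<sigma> t. \<Sum>s\<in>?P. w s * ?D s \<sigma> t) \<and>
     F (\<lambda>\<sigma> t. \<Sum>s\<in>?P. w s * ?D s \<sigma> t) = (\<lambda>k. \<Sum>s\<in>?P. w s * F (?D s) k)"
  proof -
    fix w :: "('x \<Rightarrow> 'o) \<Rightarrow> real" assume w0: "\<forall>s\<in>?P. 0 \<le> w s" and w1: "sum w ?P = 1"
    show "emp_model X Out Sig (\<lambda>\<sigma> t. \<Sum>s\<in>?P. w s * ?D s \<sigma> t) \<and>
     F (\<lambda>\<sigma> t. \<Sum>s\<in>?P. w s * ?D s \<sigma> t) = (\<lambda>k. \<Sum>s\<in>?P. w s * F (?D s) k)"
      apply (rule convex_sum[where C="emp_model X Out Sig" and F=F and p="?D" and w=w and I="?P"])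
      subgoal using Cc by blast
      subgoal using Fc by blast
      using finP neP CD w0 w1 by auto
  qed
  have sa: "sum a ?P = 1" using decomp_sum1[OF sc e a] .
  have ef: "e = (\<lambda>\<sigma> t. \<Sum>s\<in>?P. a s * ?D s \<sigma> t)" using delta_form[OF sc e a] .
  define pos where "pos = (\<Sum>s\<in>?P. max (a s) 0)"
  define neg where "neg = (\<Sum>s\<in>?P. max (- a s) 0)"
  have pn: "pos - neg = 1"
  proof -
    have "pos - neg = (\<Sum>s\<in>?P. max (a s) 0 - max (- a s) 0)" unfolding pos_def neg_def by (simp add: sum_subtractf)
    also have "\<dots> = sum a ?P" by (rule sum.cong) auto
    finally show ?thesis using sa by simp
  qed
  have neg0: "neg \<ge> 0" unfolding neg_def by (rule sum_nonneg) simp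
  have pos1: "pos \<ge> 1" using pn neg0 by simp
  define wp where "wp = (\<lambda>s. max (a s) 0 / pos)"
  have wp0: "\<forall>s\<in>?P. 0 \<le> wp s" unfolding wp_def using pos1 by simp
  have wp1: "sum wp ?P = 1" unfolding wp_def pos_def[symmetric] sum_divide_distrib[symmetric] using pos1 by simp
  define \<nu> where "\<nu> = (\<lambda>\<sigma> t. \<Sum>s\<in>?P. wp s * ?D s \<sigma> t)"
  have Cnu: "emp_model X Out Sig \<nu>" and Fnu: "F \<nu> = (\<lambda>k. \<Sum>s\<in>?P. wp s * F (?D s) k)"
    using CS[OF wp0 wp1] unfolding \<nu>_def by auto
  show ?thesis
  proof (cases "neg = 0")
    case True
    have "\<forall>s\<in>?P. max (- a s) 0 = 0" using sum_nonneg_eq_0_iff[OF finP, of "\<lambda>s. max (- a s) 0"] True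
      unfolding neg_def by simp
    then have ap: "\<forall>s\<in>?P. max (a s) 0 = a s" by auto
    have p1: "pos = 1" using pn True by simp
    have wpa: "\<forall>s\<in>?P. wp s = a s" unfolding wp_def using ap p1 by simp
    have "\<nu> = e" unfolding \<nu>_def ef using wpa by (intro ext sum.cong) auto
    then show ?thesis using Fnu wpa by (auto intro!: sum.cong)
  next
    case False
    then have negp: "neg > 0" using neg0 by simp
    define wm where "wm = (\<lambda>s. max (- a s) 0 / neg)"
    have wm0: "\<forall>s\<in>?P. 0 \<le> wm s" unfolding wm_def using negp by simp
    have wm1: "sum wm ?P = 1" unfolding wm_def neg_def[symmetric] sum_divide_distrib[symmetric] using negp by simp
    define \<mu> where "\<mu> = (\<lambda>\<sigma> t. \<Sum>s\<in>?P. wm s * ?D s \<sigma> t)"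
    have Cmu: "emp_model X Out Sig \<mu>" and Fmu: "F \<mu> = (\<lambda>k. \<Sum>s\<in>?P. wm s * F (?D s) k)"
      using CS[OF wm0 wm1] unfolding \<mu>_def by auto
    define t0 where "t0 = 1 / pos"
    have t0: "0 \<le> t0" "t0 \<le> 1" unfolding t0_def using pos1 by auto
    have coef: "\<And>s. t0 * a s + (1 - t0) * wm s = wp s"
    proof -
      fix s
      have e1: "1 - t0 = neg / pos" unfolding t0_def using pos1 pn by (simp add: field_simps)
      have "(1 - t0) * wm s = (neg / pos) * (max (- a s) 0 / neg)" using e1 unfolding wm_def by simp
      also have "\<dots> = max (- a s) 0 / pos" using negp by simp
      finally have h1: "(1 - t0) * wm s = max (- a s) 0 / pos" .
      have "t0 * a s + (1 - t0) * wm s = (a s + max (- a s) 0) / pos"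
        unfolding h1 by (simp add: t0_def add_divide_distrib)
      also have "a s + max (- a s) 0 = max (a s) 0" by auto
      finally show "t0 * a s + (1 - t0) * wm s = wp s" unfolding wp_def .
    qed
    have comb: "(\<lambda>\<sigma> t. t0 * e \<sigma> t + (1 - t0) * \<mu> \<sigma> t) = \<nu>"
    proof (intro ext)
      fix \<sigma> t
      have "(\<Sum>s\<in>?P. (t0 * a s + (1 - t0) * wm s) * ?D s \<sigma> t) =
          (\<Sum>s\<in>?P. t0 * (a s * ?D s \<sigma> t) + (1 - t0) * (wm s * ?D s \<sigma> t))"
        by (rule sum.cong) (auto simp: algebra_simps)
      also have "\<dots> = t0 * (\<Sum>s\<in>?P. a s * ?D s \<sigma> t) + (1 - t0) * (\<Sum>s\<in>?P. wm s * ?D s \<sigma> t)"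
        by (simp add: sum.distrib sum_distrib_left)
      also have "\<dots> = t0 * e \<sigma> t + (1 - t0) * \<mu> \<sigma> t"
        unfolding \<mu>_def using fun_cong[OF fun_cong[OF ef, of \<sigma>], of t] by simp
      finally have "t0 * e \<sigma> t + (1 - t0) * \<mu> \<sigma> t = (\<Sum>s\<in>?P. (t0 * a s + (1 - t0) * wm s) * ?D s \<sigma> t)" by simp
      then show "t0 * e \<sigma> t + (1 - t0) * \<mu> \<sigma> t = \<nu> \<sigma> t" unfolding \<nu>_def coef .
    qed
    have FF: "F \<nu> = (\<lambda>k. t0 * F e k + (1 - t0) * F \<mu> k)"
      using Fc[OF e Cmu t0] unfolding comb .
    show ?thesis
    proof (intro ext)
      fix k
      have h: "F \<nu> k = t0 * F e k + (1 - t0) * F \<mu> k" using FF by simp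
      have "F e k = pos * F \<nu> k - neg * F \<mu> k"
        using h pos1 pn unfolding t0_def by (simp add: field_simps)
      also have "\<dots> = (\<Sum>s\<in>?P. max (a s) 0 * F (?D s) k) - (\<Sum>s\<in>?P. max (- a s) 0 * F (?D s) k)"
        unfolding Fnu Fmu wp_def wm_def using pos1 negp by (simp add: sum_distrib_left)
      also have "\<dots> = (\<Sum>s\<in>?P. a s * F (?D s) k)"
        by (simp add: sum_subtractf[symmetric] left_diff_distrib[symmetric], rule sum.cong, auto)
      finally show "F e k = (\<Sum>s\<in>?P. a s * F (?D s) k)" .
    qed
  qed
qed

lemma unit_image: "(\<pi> :: (unit \<times> 'x) set) `` UNIV = \<pi> `` {()}"
  by auto

lemma emp_det_n:
  fixes \<pi> :: "(unit \<times> 'x) set"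
  shows "emp_det Out n_Sig \<pi> \<alpha> e UNIV (restrict (\<lambda>_. k) UNIV) =
     sum (e (\<pi> `` {()})) {t \<in> PiE (\<pi> `` {()}) Out. \<alpha> () t = k}"
proof -
  have "{s \<in> PiE (\<pi> `` {()}) Out. (\<lambda>x\<in>UNIV. \<alpha> x (restrict s (\<pi> `` {x}))) = restrict (\<lambda>_. k) UNIV}
      = {t \<in> PiE (\<pi> `` {()}) Out. \<alpha> () t = k}"
  proof (rule Collect_cong)
    fix s
    have "((\<lambda>x\<in>UNIV. \<alpha> x (restrict s (\<pi> `` {x}))) = restrict (\<lambda>_. k) UNIV) \<longleftrightarrow> \<alpha> () (restrict s (\<pi> `` {()})) = k"
      by (auto simp: fun_eq_iff)
    then show "(s \<in> PiE (\<pi> `` {()}) Out \<and> (\<lambda>x\<in>UNIV. \<alpha> x (restrict s (\<pi> `` {x}))) = restrict (\<lambda>_. k) UNIV) =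
        (s \<in> PiE (\<pi> `` {()}) Out \<and> \<alpha> () s = k)"
      using PiE_restrict_self[of s "\<pi> `` {()}" Out] by auto
  qed
  then show ?thesis unfolding emp_det_def n_Sig_def unit_image by simp
qed

lemma det_proc_n:
  fixes \<pi> :: "(unit \<times> 'x) set"
  assumes "det_proc X Out Sig n_X (n_O n) n_Sig \<pi> \<alpha>"
  shows "\<pi> `` {()} \<subseteq> X" "\<pi> `` {()} \<in> Sig" "\<And>t. t \<in> PiE (\<pi> `` {()}) Out \<Longrightarrow> \<alpha> () t < n"
  using assms unfolding det_proc_def n_X_def n_O_def n_Sig_def by auto

lemma det_n_delta:
  fixes \<pi> :: "(unit \<times> 'x) set"
  assumes sc: "scenario X Out Sig" and dp: "det_proc X Out Sig n_X (n_O n) n_Sig \<pi> \<alpha>" and s: "s \<in> PiE X Out"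
  shows "emp_det Out n_Sig \<pi> \<alpha> (delta_model Sig s) UNIV (restrict (\<lambda>_. k) UNIV) =
     (if \<alpha> () (restrict s (\<pi> `` {()})) = k then 1 else 0)"
proof -
  let ?U = "\<pi> `` {()}"
  have U: "?U \<subseteq> X" "?U \<in> Sig" using det_proc_n[OF dp] by auto
  have r: "restrict s ?U \<in> PiE ?U Out" using restrict_in_PiE[OF s U(1)] .
  have fin: "finite {t \<in> PiE ?U Out. \<alpha> () t = k}" using finite_PiE_X[OF sc U(1)] by simp
  have "sum (delta_model Sig s ?U) {t \<in> PiE ?U Out. \<alpha> () t = k} =
     (\<Sum>t\<in>{t \<in> PiE ?U Out. \<alpha> () t = k}. if restrict s ?U = t then 1 else 0)"
    by (rule sum.cong) (auto simp: delta_model_def U(2))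
  also have "\<dots> = (if restrict s ?U \<in> {t \<in> PiE ?U Out. \<alpha> () t = k} then 1 else 0)"
    by (rule sum.delta'[OF fin])
  also have "\<dots> = (if \<alpha> () (restrict s ?U) = k then 1 else 0)" using r by simp
  finally show ?thesis unfolding emp_det_n .
qed

lemma reindex_pos:
  fixes r h :: "nat \<Rightarrow> real"
  assumes r0: "\<forall>i<m. 0 \<le> r i" and hz: "\<And>i. i < m \<Longrightarrow> r i = 0 \<Longrightarrow> h i = 0"
  defines "xs \<equiv> sorted_list_of_set {i. i < m \<and> 0 < r i}"
  shows "(\<Sum>j<length xs. h (xs ! j)) = (\<Sum>i<m. h i)"
proof -
  have fin: "finite {i. i < m \<and> 0 < r i}" by simp
  have dist: "distinct xs" and set: "set xs = {i. i < m \<and> 0 < r i}" unfolding xs_def using fin by auto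
  have bij: "bij_betw ((!) xs) {..<length xs} {i. i < m \<and> 0 < r i}"
    by (rule bij_betw_nth[OF dist refl set[symmetric]])
  have "(\<Sum>j<length xs. h (xs ! j)) = sum h {i. i < m \<and> 0 < r i}"
    using sum.reindex_bij_betw[OF bij, of h] by simp
  also have "\<dots> = (\<Sum>i<m. h i)"
  proof (rule sum.mono_neutral_left)
    show "finite {..<m}" by simp
    show "{i. i < m \<and> 0 < r i} \<subseteq> {..<m}" by auto
    show "\<forall>i\<in>{..<m} - {i. i < m \<and> 0 < r i}. h i = 0"
    proof
      fix i assume i: "i \<in> {..<m} - {i. i < m \<and> 0 < r i}"
      then have "r i = 0" using r0 by force
      then show "h i = 0" using hz i by blast
    qed
  qed
  finally show ?thesis .
qed

lemma sum_e_group: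
  assumes sc: "scenario X Out Sig" and UX: "U \<subseteq> X" and US: "U \<in> Sig"
    and a: "\<forall>\<tau>\<in>Sig. \<forall>t\<in>PiE \<tau> Out. e \<tau> t = sum a {s \<in> PiE X Out. restrict s \<tau> = t}"
  shows "sum (e U) {t \<in> PiE U Out. H t = k} = sum a {s \<in> PiE X Out. H (restrict s U) = k}"
proof -
  let ?S = "{s \<in> PiE X Out. H (restrict s U) = k}"
  let ?T = "{t \<in> PiE U Out. H t = k}"
  have finS: "finite ?S" using finite_PiE_X[OF sc order_refl] by simp
  have finT: "finite ?T" using finite_PiE_X[OF sc UX] by simp
  have img: "(\<lambda>s. restrict s U) ` ?S \<subseteq> ?T" using UX by (auto simp: PiE_iff)
  have "sum a ?S = (\<Sum>t\<in>?T. sum a {s \<in> ?S. restrict s U = t})"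
    using sum.group[OF finS finT img, of a] by simp
  also have "\<dots> = (\<Sum>t\<in>?T. e U t)"
  proof (rule sum.cong[OF refl])
    fix t assume t: "t \<in> ?T"
    then have "{s \<in> ?S. restrict s U = t} = {s \<in> PiE X Out. restrict s U = t}" by auto
    then show "sum a {s \<in> ?S. restrict s U = t} = e U t" using a US t by simp
  qed
  finally show ?thesis by simp
qed

theorem mainTheorem7:
  fixes X :: "'x set" and Out :: "'x \<Rightarrow> 'o set" and Sig :: "'x set set"
    and n :: nat
    and F :: "('x set \<Rightarrow> ('x \<Rightarrow> 'o) \<Rightarrow> real) \<Rightarrow> nat \<Rightarrow> real"
  assumes scen: "scenario X Out Sig"
    and n_pos: "1 \<le> n"
    and F_into: "\<forall>e. emp_model X Out Sig e \<longrightarrow> dist_n n (F e)"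
    and F_convex: "\<forall>e1 e2 (t::real). emp_model X Out Sig e1 \<longrightarrow> emp_model X Out Sig e2 \<longrightarrow>
        0 \<le> t \<longrightarrow> t \<le> 1 \<longrightarrow>
        F (\<lambda>\<sigma> s. t * e1 \<sigma> s + (1 - t) * e2 \<sigma> s) = (\<lambda>k. t * F e1 k + (1 - t) * F e2 k)"
  shows "(\<exists>m r (f :: nat \<Rightarrow> (unit \<times> 'x) set \<times> (unit \<Rightarrow> ('x \<Rightarrow> 'o) \<Rightarrow> nat)).
            prob_proc X Out Sig n_X (n_O n) n_Sig m r f \<and>
            (\<forall>e. emp_model X Out Sig e \<longrightarrow>
                 F e = emp_n_to_dist (emp_prob Out n_Sig m r f e)))
    \<longleftrightarrow>
    (\<exists>m (r :: nat \<Rightarrow> real) (Fs :: nat \<Rightarrow> ('x \<Rightarrow> 'o) \<Rightarrow> nat).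
        (\<forall>j<m. 0 < r j) \<and> (\<Sum>j<m. r j) = 1 \<and>
        (\<forall>j<m. \<forall>s\<in>PiE X Out. Fs j s < n) \<and>
        (\<forall>s\<in>PiE X Out. F (delta_model Sig s) = (\<lambda>k. \<Sum>j<m. r j * (if Fs j s = k then 1 else 0))) \<and>
        (\<forall>j<m. least_factor_set X Out (Fs j) \<in> Sig))"
proof
  note sc = scen
  assume "\<exists>m r (f :: nat \<Rightarrow> (unit \<times> 'x) set \<times> (unit \<Rightarrow> ('x \<Rightarrow> 'o) \<Rightarrow> nat)).
            prob_proc X Out Sig n_X (n_O n) n_Sig m r f \<and>
            (\<forall>e. emp_model X Out Sig e \<longrightarrow>
                 F e = emp_n_to_dist (emp_prob Out n_Sig m r f e))"
  then obtain m r and f :: "nat \<Rightarrow> (unit \<times> 'x) set \<times> (unit \<Rightarrow> ('x \<Rightarrow> 'o) \<Rightarrow> nat)"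
    where pp: "prob_proc X Out Sig n_X (n_O n) n_Sig m r f"
      and Fe: "\<forall>e. emp_model X Out Sig e \<longrightarrow> F e = emp_n_to_dist (emp_prob Out n_Sig m r f e)"
    by blast
  have r0: "\<forall>i<m. 0 \<le> r i" and rs: "(\<Sum>i<m. r i) = 1"
    and dp: "\<And>i. i < m \<Longrightarrow> det_proc X Out Sig n_X (n_O n) n_Sig (fst (f i)) (snd (f i))"
    using pp unfolding prob_proc_def by auto
  define g where "g = (\<lambda>i s. snd (f i) () (restrict s (fst (f i) `` {()})))"
  define xs where "xs = sorted_list_of_set {i. i < m \<and> 0 < r i}"
  have setxs: "set xs = {i. i < m \<and> 0 < r i}" unfolding xs_def by simp
  have xsm: "\<And>j. j < length xs \<Longrightarrow> xs ! j < m \<and> 0 < r (xs ! j)"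
    using nth_mem setxs by blast
  have gn: "\<And>i s. i < m \<Longrightarrow> s \<in> PiE X Out \<Longrightarrow> g i s < n"
  proof -
    fix i s assume i: "i < m" and s: "s \<in> PiE X Out"
    show "g i s < n" unfolding g_def
      by (rule det_proc_n(3)[OF dp[OF i]], rule restrict_in_PiE[OF s det_proc_n(1)[OF dp[OF i]]])
  qed
  have gL: "\<And>i. i < m \<Longrightarrow> least_factor_set X Out (g i) \<in> Sig"
  proof -
    fix i assume i: "i < m"
    let ?U = "fst (f i) `` {()}"
    have UX: "?U \<subseteq> X" and US: "?U \<in> Sig" using det_proc_n[OF dp[OF i]] by auto
    have "factors_through X Out (g i) ?U" unfolding factors_through_def g_def by blast
    then have "least_factor_set X Out (g i) \<subseteq> ?U" using lfs[OF sc, of "g i"] UX by blast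
    then show "least_factor_set X Out (g i) \<in> Sig" using scen_facts(6)[OF sc US] by blast
  qed
  have Fd: "\<And>s. s \<in> PiE X Out \<Longrightarrow> F (delta_model Sig s) = (\<lambda>k. \<Sum>i<m. r i * (if g i s = k then 1 else 0))"
  proof -
    fix s assume s: "s \<in> PiE X Out"
    have "F (delta_model Sig s) = emp_n_to_dist (emp_prob Out n_Sig m r f (delta_model Sig s))"
      using Fe delta_emp[OF sc s] by blast
    also have "\<dots> = (\<lambda>k. \<Sum>i<m. r i * (if g i s = k then 1 else 0))"
      unfolding emp_n_to_dist_def emp_prob_def
    proof (intro ext sum.cong refl)
      fix k i assume "i \<in> {..<m}"
      then show "r i * emp_det Out n_Sig (fst (f i)) (snd (f i)) (delta_model Sig s) UNIV (restrict (\<lambda>_. k) UNIV) =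
          r i * (if g i s = k then 1 else 0)"
        using det_n_delta[OF sc dp s, of i k] unfolding g_def by simp
    qed
    finally show "F (delta_model Sig s) = (\<lambda>k. \<Sum>i<m. r i * (if g i s = k then 1 else 0))" .
  qed
  show "\<exists>m (r :: nat \<Rightarrow> real) (Fs :: nat \<Rightarrow> ('x \<Rightarrow> 'o) \<Rightarrow> nat).
        (\<forall>j<m. 0 < r j) \<and> (\<Sum>j<m. r j) = 1 \<and>
        (\<forall>j<m. \<forall>s\<in>PiE X Out. Fs j s < n) \<and>
        (\<forall>s\<in>PiE X Out. F (delta_model Sig s) = (\<lambda>k. \<Sum>j<m. r j * (if Fs j s = k then 1 else 0))) \<and>
        (\<forall>j<m. least_factor_set X Out (Fs j) \<in> Sig)"
  proof (intro exI conjI allI impI ballI)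
    fix j assume "j < length xs"
    then show "0 < r (xs ! j)" using xsm by blast
  next
    show "(\<Sum>j<length xs. r (xs ! j)) = 1"
      using reindex_pos[OF r0, of r] rs unfolding xs_def by simp
  next
    fix j s assume "j < length xs" "s \<in> PiE X Out"
    then show "g (xs ! j) s < n" using xsm gn by blast
  next
    fix s assume s: "s \<in> PiE X Out"
    show "F (delta_model Sig s) = (\<lambda>k. \<Sum>j<length xs. r (xs ! j) * (if g (xs ! j) s = k then 1 else 0))"
    proof
      fix k
      have "(\<Sum>j<length xs. r (xs ! j) * (if g (xs ! j) s = k then 1 else 0)) =
          (\<Sum>i<m. r i * (if g i s = k then 1 else 0))"
        using reindex_pos[OF r0, of "\<lambda>i. r i * (if g i s = k then 1 else 0)"] unfolding xs_def by simp
      then show "F (delta_model Sig s) k = (\<Sum>j<length xs. r (xs ! j) * (if g (xs ! j) s = k then 1 else 0))"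
        using Fd[OF s] by simp
    qed
  next
    fix j assume "j < length xs"
    then show "least_factor_set X Out (g (xs ! j)) \<in> Sig" using xsm gL by blast
  qed
next
  note sc = scen
  assume "\<exists>m (r :: nat \<Rightarrow> real) (Fs :: nat \<Rightarrow> ('x \<Rightarrow> 'o) \<Rightarrow> nat).
        (\<forall>j<m. 0 < r j) \<and> (\<Sum>j<m. r j) = 1 \<and>
        (\<forall>j<m. \<forall>s\<in>PiE X Out. Fs j s < n) \<and>
        (\<forall>s\<in>PiE X Out. F (delta_model Sig s) = (\<lambda>k. \<Sum>j<m. r j * (if Fs j s = k then 1 else 0))) \<and>
        (\<forall>j<m. least_factor_set X Out (Fs j) \<in> Sig)"
  then obtain m and r :: "nat \<Rightarrow> real" and Fs :: "nat \<Rightarrow> ('x \<Rightarrow> 'o) \<Rightarrow> nat"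
    where r0: "\<forall>j<m. 0 < r j" and rs: "(\<Sum>j<m. r j) = 1"
      and Fn: "\<forall>j<m. \<forall>s\<in>PiE X Out. Fs j s < n"
      and Fd: "\<forall>s\<in>PiE X Out. F (delta_model Sig s) = (\<lambda>k. \<Sum>j<m. r j * (if Fs j s = k then 1 else 0))"
      and Ls: "\<forall>j<m. least_factor_set X Out (Fs j) \<in> Sig"
    by blast
  define U where "U = (\<lambda>j. least_factor_set X Out (Fs j))"
  have UX: "\<And>j. U j \<subseteq> X" and ft: "\<And>j. factors_through X Out (Fs j) (U j)"
    unfolding U_def using lfs[OF sc] by blast+
  define H where "H = (\<lambda>j. SOME H. \<forall>s\<in>PiE X Out. Fs j s = H (restrict s (U j)))"
  have HH: "\<And>j s. s \<in> PiE X Out \<Longrightarrow> Fs j s = H j (restrict s (U j))"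
  proof -
    fix j s assume s: "s \<in> PiE X Out"
    have "\<exists>H. \<forall>s\<in>PiE X Out. Fs j s = H (restrict s (U j))" using ft[of j] unfolding factors_through_def .
    then have "\<forall>s\<in>PiE X Out. Fs j s = H j (restrict s (U j))" unfolding H_def by (rule someI_ex)
    then show "Fs j s = H j (restrict s (U j))" using s by blast
  qed
  obtain oo where oo: "oo \<in> PiE X Out" using PiE_ne[OF sc] by blast
  have Hn: "\<And>j t. j < m \<Longrightarrow> t \<in> PiE (U j) Out \<Longrightarrow> H j t < n"
  proof -
    fix j t assume j: "j < m" and t: "t \<in> PiE (U j) Out"
    have ms: "merge (U j) t oo \<in> PiE X Out" using merge_PiE[OF t oo UX] .
    have "H j t = Fs j (merge (U j) t oo)" using HH[OF ms] restrict_merge[OF t] by simp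
    then show "H j t < n" using Fn j ms by simp
  qed
  define f :: "nat \<Rightarrow> (unit \<times> 'x) set \<times> (unit \<Rightarrow> ('x \<Rightarrow> 'o) \<Rightarrow> nat)"
    where "f = (\<lambda>j. ({()} \<times> U j, \<lambda>_ t. H j t))"
  have img1: "\<And>j. fst (f j) `` {()} = U j" unfolding f_def by auto
  have pp: "prob_proc X Out Sig n_X (n_O n) n_Sig m r f"
    unfolding prob_proc_def
  proof (intro conjI allI impI)
    fix i assume "i < m" then show "0 \<le> r i" using r0 by auto
  next
    show "(\<Sum>i<m. r i) = 1" by (rule rs)
  next
    fix i assume i: "i < m"
    show "det_proc X Out Sig n_X (n_O n) n_Sig (fst (f i)) (snd (f i))"
      unfolding det_proc_def
    proof (intro conjI ballI)
      show "fst (f i) \<subseteq> n_X \<times> X" unfolding f_def n_X_def using UX by auto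
    next
      fix \<sigma> :: "unit set" assume "\<sigma> \<in> n_Sig"
      show "fst (f i) `` \<sigma> \<in> Sig"
      proof (cases "\<sigma> = {}")
        case True then show ?thesis using scen_facts(5)[OF sc] by simp
      next
        case False
        then have "\<sigma> = {()}" by auto
        then show ?thesis using img1[of i] Ls i unfolding U_def by simp
      qed
    next
      fix x s assume "x \<in> n_X" "s \<in> PiE (fst (f i) `` {x}) Out"
      then have "s \<in> PiE (U i) Out" using img1[of i] by simp
      then show "snd (f i) x s \<in> n_O n x" using Hn[OF i] unfolding f_def n_O_def by simp
    qed
  qed
  show "\<exists>m r (f :: nat \<Rightarrow> (unit \<times> 'x) set \<times> (unit \<Rightarrow> ('x \<Rightarrow> 'o) \<Rightarrow> nat)).
            prob_proc X Out Sig n_X (n_O n) n_Sig m r f \<and>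
            (\<forall>e. emp_model X Out Sig e \<longrightarrow>
                 F e = emp_n_to_dist (emp_prob Out n_Sig m r f e))"
  proof (intro exI conjI allI impI)
    show "prob_proc X Out Sig n_X (n_O n) n_Sig m r f" by (rule pp)
  next
    fix e assume e: "emp_model X Out Sig e"
    obtain a where a: "\<forall>\<tau>\<in>Sig. \<forall>t\<in>PiE \<tau> Out. e \<tau> t = sum a {s \<in> PiE X Out. restrict s \<tau> = t}"
      using decomp[OF sc e] by blast
    have Fe: "F e = (\<lambda>k. \<Sum>s\<in>PiE X Out. a s * F (delta_model Sig s) k)"
      using F_decomp[OF sc F_convex e a] .
    show "F e = emp_n_to_dist (emp_prob Out n_Sig m r f e)"
    proof
      fix k
      have finP: "finite (PiE X Out)" using finite_PiE_X[OF sc order_refl] .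
      have "F e k = (\<Sum>s\<in>PiE X Out. a s * (\<Sum>j<m. r j * (if Fs j s = k then 1 else 0)))"
        using Fe Fd by simp
      also have "\<dots> = (\<Sum>j<m. r j * (\<Sum>s\<in>PiE X Out. if Fs j s = k then a s else 0))"
        by (simp add: sum_distrib_left sum.swap[of _ "PiE X Out"] algebra_simps if_distrib cong: if_cong)
      also have "\<dots> = (\<Sum>j<m. r j * sum a {s \<in> PiE X Out. Fs j s = k})"
        using sum.inter_filter[OF finP, of a] by simp
      also have "\<dots> = (\<Sum>j<m. r j * emp_det Out n_Sig (fst (f j)) (snd (f j)) e UNIV (restrict (\<lambda>_. k) UNIV))"
      proof (rule sum.cong[OF refl])
        fix j assume j: "j \<in> {..<m}"
        have US: "U j \<in> Sig" using Ls j unfolding U_def by simp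
        have "emp_det Out n_Sig (fst (f j)) (snd (f j)) e UNIV (restrict (\<lambda>_. k) UNIV) =
            sum (e (U j)) {t \<in> PiE (U j) Out. H j t = k}"
          unfolding emp_det_n img1 by (simp add: f_def)
        also have "\<dots> = sum a {s \<in> PiE X Out. H j (restrict s (U j)) = k}"
          by (rule sum_e_group[OF sc UX US a])
        also have "\<dots> = sum a {s \<in> PiE X Out. Fs j s = k}"
          using HH by (intro arg_cong[where f="sum a"] Collect_cong) auto
        finally show "r j * sum a {s \<in> PiE X Out. Fs j s = k} =
            r j * emp_det Out n_Sig (fst (f j)) (snd (f j)) e UNIV (restrict (\<lambda>_. k) UNIV)" by simp
      qed
      finally show "F e k = emp_n_to_dist (emp_prob Out n_Sig m r f e) k"
        unfolding emp_n_to_dist_def emp_prob_def by simp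
    qed
  qed
qed

end
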